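(* Let $m\geq1$, let $p_{1j},p_{2j}\in\mathbb{R}$, $w_{j}>0$, $d_{j}>0$, $h_{j}\in\mathbb{R}$ for $j=1,\ldots,m$, and let $f_{1}\leq g_{1}$, $f_{2}\leq g_{2}$, $a\leq b$ be reals. Consider the problem of minimizing over $(x_{1},x_{2})^{T}\in\mathbb{R}^{2}$ $$\max_{1\leq j\leq m}\big(w_{j}(|x_{1}-p_{1j}|+|x_{2}-p_{2j}|)+h_{j}\big)$$ subject to $|x_{1}-p_{1j}|+|x_{2}-p_{2j}|\leq d_{j}$ ($j=1,\ldots,m$), $f_{1}-x_{2}\leq x_{1}\leq g_{1}-x_{2}$, $f_{2}+x_{1}\leq x_{2}\leq g_{2}+x_{1}$, and $a\leq x_{1}\leq b$. Let $o_{1j}=p_{1j}+p_{2j}$ and $o_{2j}=p_{2j}-p_{1j}$ for $j=1,\ldots,m$, and let $b_{11}^{\ast}=b_{22}^{\ast}=0$, $b_{12}^{\ast}=2a$, $b_{21}^{\ast}=-2b$. Suppose that $$b_{ik}^{\ast}+\max_{1\leq l\leq m}\max\{o_{kl}-d_{l},f_{k}\}\leq\min_{1\leq j\leq m}\min\{o_{ij}+d_{j},g_{i}\},\qquad i,k=1,2.$$ Then the minimum value of the problem is $$\theta=\max_{1\leq j,l\leq m}\max\Bigg\{\frac{w_{l}h_{j}}{w_{j}+w_{l}}+\frac{w_{j}h_{l}}{w_{j}+w_{l}}+\frac{w_{j}w_{l}}{w_{j}+w_{l}}\max_{1\leq i,k\leq2}(b_{ik}^{\ast}-o_{ij}+o_{kl}),$$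 $$h_{j}+w_{j}\max_{1\leq i,k\leq2}\big(b_{ik}^{\ast}-o_{ij}+\max\{o_{kl}-d_{l},f_{k}\}\big),\ h_{l}+w_{l}\max_{1\leq i,k\leq2}\big(b_{ik}^{\ast}-\min\{d_{j}+o_{ij},g_{i}\}+o_{kl}\big)\Bigg\},$$ and all solution vectors $\bm{x}=(x_{1},x_{2})^{T}$ have entries $x_{1}=(y_{1}-y_{2})/2$, $x_{2}=(y_{1}+y_{2})/2$, where $y_{i}=\max\{b_{i1}^{\ast}+u_{1},b_{i2}^{\ast}+u_{2}\}$ for $i=1,2$ and the parameter vector $\bm{u}=(u_{1},u_{2})^{T}$ satisfies, for $k=1,2$, $$\max_{1\leq j\leq m}\max\left\{\frac{h_{j}-\theta}{w_{j}}+o_{kj},\ -d_{j}+o_{kj},\ f_{k}\right\}\leq u_{k}\leq\min_{1\leq i\leq2}\min_{1\leq j\leq m}\left(\min\left\{\frac{\theta-h_{j}}{w_{j}}+o_{ij},\ d_{j}+o_{ij},\ g_{i}\right\}-b_{ik}^{\ast}\right).$$ *)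

theory Defs
  imports Main "HOL.Real"
begin

definition sel :: "real \<Rightarrow> real \<Rightarrow> nat \<Rightarrow> real" where
  "sel x y i = (if i = 1 then x else y)"

definition oc :: "(nat \<Rightarrow> real) \<Rightarrow> (nat \<Rightarrow> real) \<Rightarrow> nat \<Rightarrow> nat \<Rightarrow> real" where
  "oc p1 p2 i j = (if i = 1 then p1 j + p2 j else p2 j - p1 j)"

definition bst :: "real \<Rightarrow> real \<Rightarrow> nat \<Rightarrow> nat \<Rightarrow> real" where
  "bst a b i k = (if i = k then 0 else if i = 1 then 2 * a else - 2 * b)"

definition objf :: "nat \<Rightarrow> (nat \<Rightarrow> real) \<Rightarrow> (nat \<Rightarrow> real) \<Rightarrow> (nat \<Rightarrow> real) \<Rightarrow> (nat \<Rightarrow> real)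
    \<Rightarrow> real \<Rightarrow> real \<Rightarrow> real" where
  "objf m p1 p2 w h x1 x2 =
     Max ((\<lambda>j. w j * (\<bar>x1 - p1 j\<bar> + \<bar>x2 - p2 j\<bar>) + h j) ` {1..m})"

definition feasible :: "nat \<Rightarrow> (nat \<Rightarrow> real) \<Rightarrow> (nat \<Rightarrow> real) \<Rightarrow> (nat \<Rightarrow> real)
    \<Rightarrow> real \<Rightarrow> real \<Rightarrow> real \<Rightarrow> real \<Rightarrow> real \<Rightarrow> real \<Rightarrow> real \<Rightarrow> real \<Rightarrow> bool" where
  "feasible m p1 p2 d f1 g1 f2 g2 a b x1 x2 \<longleftrightarrow>
     (\<forall>j\<in>{1..m}. \<bar>x1 - p1 j\<bar> + \<bar>x2 - p2 j\<bar> \<le> d j) \<and>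
     f1 - x2 \<le> x1 \<and> x1 \<le> g1 - x2 \<and>
     f2 + x1 \<le> x2 \<and> x2 \<le> g2 + x1 \<and>
     a \<le> x1 \<and> x1 \<le> b"

end

theory Submission
  imports Defs
begin

lemma Max_img_le: "finite S \<Longrightarrow> S \<noteq> {} \<Longrightarrow> Max (f ` S) \<le> (t::real) \<longleftrightarrow> (\<forall>x\<in>S. f x \<le> t)"
  by (simp add: Max_le_iff)
lemma Min_img_ge: "finite S \<Longrightarrow> S \<noteq> {} \<Longrightarrow> (t::real) \<le> Min (f ` S) \<longleftrightarrow> (\<forall>x\<in>S. t \<le> f x)"
  by (simp add: Min_ge_iff)

lemma T2: "(w::real) > 0 \<Longrightarrow> h + w * X \<le> t \<longleftrightarrow> X \<le> (t - h) / w"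
  by (simp add: pos_le_divide_eq algebra_simps)

lemma T1: assumes "(wj::real) > 0" "wl > 0"
  shows "wl * hj / (wj + wl) + wj * hl / (wj + wl) + wj * wl / (wj + wl) * X \<le> t
     \<longleftrightarrow> X \<le> (t - hj) / wj + (t - hl) / wl"
proof -
  have "wl * hj / (wj + wl) + wj * hl / (wj + wl) + wj * wl / (wj + wl) * X
     = (wl * hj + wj * hl + wj * wl * X) / (wj + wl)" by (simp add: add_divide_distrib)
  also have "\<dots> \<le> t \<longleftrightarrow> wl * hj + wj * hl + wj * wl * X \<le> t * (wj + wl)"
    using assms by (simp add: pos_divide_le_eq)
  also have "(t - hj) / wj + (t - hl) / wl = ((t - hj) * wl + (t - hl) * wj) / (wj * wl)"
    using assms by (simp add: field_simps)
  moreover have "X \<le> ((t - hj) * wl + (t - hl) * wj) / (wj * wl) \<longleftrightarrow> wj * wl * X \<le> (t - hj) * wl + (t - hl) * wj"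
    using assms by (simp add: pos_le_divide_eq mult.commute)
  ultimately show ?thesis by (simp add: algebra_simps)
qed

lemma abs_key: "(\<bar>s\<bar> + \<bar>u\<bar> \<le> (c::real)) \<longleftrightarrow> (\<bar>s + u\<bar> \<le> c \<and> \<bar>u - s\<bar> \<le> c)"
  by arith

lemma sel1[simp]: "sel x y 1 = x" and sel2[simp]: "sel x y 2 = y" by (simp_all add: sel_def)
lemma bst_simps[simp]: "bst a b 1 1 = 0" "bst a b 2 2 = 0" "bst a b 1 2 = 2 * a" "bst a b 2 1 = - 2 * b"
  by (simp_all add: bst_def)
lemma sel1'[simp]: "sel x y (Suc 0) = x" by (simp add: sel_def)
lemma bst_simps'[simp]: "bst a b (Suc 0) (Suc 0) = 0" "bst a b (Suc 0) 2 = 2 * a" "bst a b 2 (Suc 0) = - 2 * b"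
  by (simp_all add: bst_def)

definition lowb where "lowb m p1 p2 w d h f1 f2 t k =
  Max ((\<lambda>j. max (max ((h j - t) / w j + oc p1 p2 k j) (- d j + oc p1 p2 k j)) (sel f1 f2 k)) ` {1..m})"
definition uppb where "uppb m p1 p2 w d h g1 g2 a b t k =
  Min ((\<lambda>(i,j). min (min ((t - h j) / w j + oc p1 p2 i j) (d j + oc p1 p2 i j))
                                     (sel g1 g2 i) - bst a b i k) ` ({1,2} \<times> {1..m}))"
definition Gy where "Gy m p1 p2 w d h f1 g1 f2 g2 a b t y1 y2 \<longleftrightarrow>
  (\<forall>k\<in>{1::nat,2}. (\<forall>j\<in>{1..m}. \<bar>sel y1 y2 k - oc p1 p2 k j\<bar> \<le> (t - h j) / w j
        \<and> \<bar>sel y1 y2 k - oc p1 p2 k j\<bar> \<le> d j)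
     \<and> sel f1 f2 k \<le> sel y1 y2 k \<and> sel y1 y2 k \<le> sel g1 g2 k)
  \<and> y2 + 2 * a \<le> y1 \<and> y1 - 2 * b \<le> y2"

lemma L1: assumes "m \<ge> 1"
  shows "lowb m p1 p2 w d h f1 f2 t k \<le> v \<longleftrightarrow>
    (\<forall>j\<in>{1..m}. - ((t - h j) / w j) + oc p1 p2 k j \<le> v \<and> - d j + oc p1 p2 k j \<le> v) \<and> sel f1 f2 k \<le> v"
proof -
  have ne: "{1..m} \<noteq> {}" using assms by auto
  have e: "(h j - t) / w j = - ((t - h j) / w j)" for j by (simp add: minus_divide_left)
  show ?thesis unfolding lowb_def using ne
    by (auto simp add: Max_img_le e)
qed

lemma L2: assumes "m \<ge> 1"
  shows "v \<le> uppb m p1 p2 w d h g1 g2 a b t k \<longleftrightarrow>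
    (\<forall>i\<in>{1,2}. \<forall>j\<in>{1..m}. v \<le> (t - h j) / w j + oc p1 p2 i j - bst a b i k
        \<and> v \<le> d j + oc p1 p2 i j - bst a b i k) \<and> (\<forall>i\<in>{1,2}. v \<le> sel g1 g2 i - bst a b i k)"
proof -
  have ne: "{1..m} \<noteq> {}" using assms by auto
  show ?thesis unfolding uppb_def using ne
    by (auto simp add: Min_img_ge)
qed

lemma Gu: assumes m: "m \<ge> 1" and ab: "a \<le> b"
  shows "Gy m p1 p2 w d h f1 g1 f2 g2 a b t y1 y2 \<longleftrightarrow>
    (\<exists>u1 u2. (\<forall>k\<in>{1,2}. lowb m p1 p2 w d h f1 f2 t k \<le> sel u1 u2 k
                \<and> sel u1 u2 k \<le> uppb m p1 p2 w d h g1 g2 a b t k)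
       \<and> y1 = max (bst a b 1 1 + u1) (bst a b 1 2 + u2) \<and> y2 = max (bst a b 2 1 + u1) (bst a b 2 2 + u2))"
  (is "?G \<longleftrightarrow> ?U")
proof
  assume G: ?G
  show ?U
  proof (intro exI conjI)
    show "y1 = max (bst a b 1 1 + y1) (bst a b 1 2 + y2)" "y2 = max (bst a b 2 1 + y1) (bst a b 2 2 + y2)"
      using G by (auto simp: Gy_def)
    show "\<forall>k\<in>{1,2}. lowb m p1 p2 w d h f1 f2 t k \<le> sel y1 y2 k \<and> sel y1 y2 k \<le> uppb m p1 p2 w d h g1 g2 a b t k"
      using G unfolding L1[OF m] L2[OF m] Gy_def by (auto simp: abs_le_iff)
  qed
next
  assume ?U
  then obtain u1 u2 where U: "\<forall>k\<in>{1,2}. lowb m p1 p2 w d h f1 f2 t k \<le> sel u1 u2 k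
                \<and> sel u1 u2 k \<le> uppb m p1 p2 w d h g1 g2 a b t k"
     and y1: "y1 = max u1 (2 * a + u2)" and y2: "y2 = max (- 2 * b + u1) u2" by auto
  from U have U': "(\<forall>j\<in>{1..m}. - ((t - h j) / w j) + oc p1 p2 k j \<le> sel u1 u2 k \<and> - d j + oc p1 p2 k j \<le> sel u1 u2 k) \<and> sel f1 f2 k \<le> sel u1 u2 k
    \<and> (\<forall>i\<in>{1,2}. \<forall>j\<in>{1..m}. sel u1 u2 k \<le> (t - h j) / w j + oc p1 p2 i j - bst a b i k
        \<and> sel u1 u2 k \<le> d j + oc p1 p2 i j - bst a b i k) \<and> (\<forall>i\<in>{1,2}. sel u1 u2 k \<le> sel g1 g2 i - bst a b i k)"
    if "k \<in> {1,2}" for k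
    using that unfolding L1[OF m] L2[OF m] by blast
  have lo: "\<And>k j. k\<in>{1,2} \<Longrightarrow> j\<in>{1..m} \<Longrightarrow> - ((t - h j) / w j) + oc p1 p2 k j \<le> sel u1 u2 k \<and> - d j + oc p1 p2 k j \<le> sel u1 u2 k"
    using U' by blast
  have lof: "\<And>k. k\<in>{1,2} \<Longrightarrow> sel f1 f2 k \<le> sel u1 u2 k" using U' by blast
  have up: "\<And>k i j. k\<in>{1,2} \<Longrightarrow> i\<in>{1,2} \<Longrightarrow> j\<in>{1..m} \<Longrightarrow> sel u1 u2 k \<le> (t - h j) / w j + oc p1 p2 i j - bst a b i k
        \<and> sel u1 u2 k \<le> d j + oc p1 p2 i j - bst a b i k" using U' by blast
  have upg: "\<And>k i. k\<in>{1,2} \<Longrightarrow> i\<in>{1,2} \<Longrightarrow> sel u1 u2 k \<le> sel g1 g2 i - bst a b i k" using U' by blast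
  note A = lof[of 1] lof[of 2] upg[of 1 1] upg[of 1 2] upg[of 2 1] upg[of 2 2]
  show ?G unfolding Gy_def
  proof (intro conjI ballI)
    fix k :: nat and j assume k: "k \<in> {1,2}" and j: "j \<in> {1..m}"
    show "\<bar>sel y1 y2 k - oc p1 p2 k j\<bar> \<le> (t - h j) / w j"
      using k lo[of 1 j] lo[of 2 j] up[of 1 1 j] up[of 1 2 j] up[of 2 1 j] up[of 2 2 j] j unfolding y1 y2 by (auto simp: abs_le_iff max_def)
    show "\<bar>sel y1 y2 k - oc p1 p2 k j\<bar> \<le> d j"
      using k lo[of 1 j] lo[of 2 j] up[of 1 1 j] up[of 1 2 j] up[of 2 1 j] up[of 2 2 j] j unfolding y1 y2 by (auto simp: abs_le_iff max_def)
  next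
    fix k :: nat assume k: "k \<in> {1,2}"
    show "sel f1 f2 k \<le> sel y1 y2 k" "sel y1 y2 k \<le> sel g1 g2 k"
      using k A unfolding y1 y2 by (auto simp: max_def)
  next
    show "y2 + 2 * a \<le> y1" "y1 - 2 * b \<le> y2" using ab unfolding y1 y2 by (auto simp: max_def)
  qed
qed

lemma Max_le_Min: "finite S \<Longrightarrow> S \<noteq> {} \<Longrightarrow> finite T \<Longrightarrow> T \<noteq> {} \<Longrightarrow>
  Max (f ` S) \<le> Min (g ` T) \<longleftrightarrow> (\<forall>x\<in>S. \<forall>y\<in>T. f x \<le> (g y :: real))"
  by (auto simp add: Max_le_iff Min_ge_iff)

lemma cMax_le_Min: "finite S \<Longrightarrow> S \<noteq> {} \<Longrightarrow> finite T \<Longrightarrow> T \<noteq> {} \<Longrightarrow>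
  c + Max (f ` S) \<le> Min (g ` T) \<longleftrightarrow> (\<forall>x\<in>S. \<forall>y\<in>T. c + f x \<le> (g y :: real))"
proof -
  assume a: "finite S" "S \<noteq> {}" "finite T" "T \<noteq> {}"
  have "c + Max (f ` S) \<le> Min (g ` T) \<longleftrightarrow> Max (f ` S) \<le> Min (g ` T) - c" by linarith
  also have "\<dots> \<longleftrightarrow> (\<forall>x\<in>S. f x \<le> Min (g ` T) - c)" using a by (simp add: Max_le_iff)
  also have "\<dots> \<longleftrightarrow> (\<forall>x\<in>S. c + f x \<le> Min (g ` T))" by (auto simp: algebra_simps)
  also have "\<dots> \<longleftrightarrow> (\<forall>x\<in>S. \<forall>y\<in>T. c + f x \<le> g y)" using a by (simp add: Min_ge_iff)
  finally show ?thesis .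
qed

lemma Max4: "Max ((\<lambda>(i,k). F i k) ` ({1::nat,2}\<times>{1::nat,2})) \<le> (c::real) \<longleftrightarrow> (\<forall>i\<in>{1,2}. \<forall>k\<in>{1,2}. F i k \<le> c)"
  by (subst Max_img_le) auto

lemma pmax: "(x::real) + max a b \<le> c \<longleftrightarrow> x + a \<le> c \<and> x + b \<le> c" by auto
lemma mmin: "(x::real) - min a b + y \<le> c \<longleftrightarrow> x - a + y \<le> c \<and> x - b + y \<le> c" by auto
lemma pmin: "(L::real) \<le> min X Y - z \<longleftrightarrow> L \<le> X - z \<and> L \<le> Y - z" by auto

lemma pw_abs: "(max (max (- rl + okl) (- dl + okl)) fk \<le> min (min (rj + oij) (dj + oij)) gi - bik) \<longleftrightarrow>
  (bik - oij + okl \<le> rj + rl \<and> bik - oij + max (okl - dl) fk \<le> rj \<and> bik - min (dj + oij) gi + okl \<le> (rl::real))"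
  if C: "bik + max (okl - dl) fk \<le> min (oij + dj) gi"
  using C unfolding max.bounded_iff min.bounded_iff pmax mmin pmin
  by (intro iffI conjI; elim conjE; linarith)

lemma feas_obj: assumes m: "m \<ge> 1" and w: "\<forall>j\<in>{1..m}. w j > 0"
  shows "(feasible m p1 p2 d f1 g1 f2 g2 a b x1 x2 \<and> objf m p1 p2 w h x1 x2 \<le> t)
    \<longleftrightarrow> Gy m p1 p2 w d h f1 g1 f2 g2 a b t (x1 + x2) (x2 - x1)"
proof -
  have ne: "{1..m} \<noteq> {}" using m by auto
  have o1: "objf m p1 p2 w h x1 x2 \<le> t \<longleftrightarrow> (\<forall>j\<in>{1..m}. \<bar>x1 - p1 j\<bar> + \<bar>x2 - p2 j\<bar> \<le> (t - h j) / w j)"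
  proof -
    have "objf m p1 p2 w h x1 x2 \<le> t \<longleftrightarrow> (\<forall>j\<in>{1..m}. h j + w j * (\<bar>x1 - p1 j\<bar> + \<bar>x2 - p2 j\<bar>) \<le> t)"
      unfolding objf_def using ne by (simp add: Max_img_le add.commute)
    also have "\<dots> \<longleftrightarrow> (\<forall>j\<in>{1..m}. \<bar>x1 - p1 j\<bar> + \<bar>x2 - p2 j\<bar> \<le> (t - h j) / w j)"
      using w T2 by auto
    finally show ?thesis .
  qed
  have key: "(\<bar>x1 - p1 j\<bar> + \<bar>x2 - p2 j\<bar> \<le> c) \<longleftrightarrow>
     (\<bar>(x1 + x2) - oc p1 p2 1 j\<bar> \<le> c \<and> \<bar>(x2 - x1) - oc p1 p2 2 j\<bar> \<le> c)" for j c
    unfolding oc_def by simp arith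
  show ?thesis unfolding o1 feasible_def Gy_def using key
    by (auto simp: ball_conj_distrib)
qed

lemma theta_char:
  fixes m :: nat and p1 p2 w d h :: "nat \<Rightarrow> real"
    and f1 g1 f2 g2 a b :: real
  assumes m: "m \<ge> 1"
    and w: "\<forall>j\<in>{1..m}. w j > 0"
    and cond: "\<forall>i\<in>{1,2}. \<forall>k\<in>{1,2}.
       bst a b i k + Max ((\<lambda>l. max (oc p1 p2 k l - d l) (sel f1 f2 k)) ` {1..m})
         \<le> Min ((\<lambda>j. min (oc p1 p2 i j + d j) (sel g1 g2 i)) ` {1..m})"
  and th: "\<theta> = Max ((\<lambda>(j,l).
      max (max
        (w l * h j / (w j + w l) + w j * h l / (w j + w l)
          + w j * w l / (w j + w l) *
            Max ((\<lambda>(i,k). bst a b i k - oc p1 p2 i j + oc p1 p2 k l) ` ({1,2} \<times> {1,2})))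
        (h j + w j *
            Max ((\<lambda>(i,k). bst a b i k - oc p1 p2 i j
                   + max (oc p1 p2 k l - d l) (sel f1 f2 k)) ` ({1,2} \<times> {1,2}))))
        (h l + w l *
            Max ((\<lambda>(i,k). bst a b i k - min (d j + oc p1 p2 i j) (sel g1 g2 i)
                   + oc p1 p2 k l) ` ({1,2} \<times> {1,2}))))
      ` ({1..m} \<times> {1..m}))" (is "_ = Max (?T ` _)")
  shows "(\<forall>k\<in>{1,2}. lowb m p1 p2 w d h f1 f2 t k \<le> uppb m p1 p2 w d h g1 g2 a b t k) \<longleftrightarrow> \<theta> \<le> t"
proof -
  let ?M = "{1..m}"
  have ne: "?M \<noteq> {}" using m by auto
  define r where "r j = (t - h j) / w j" for j
  define R where "R j l i k \<longleftrightarrow> bst a b i k - oc p1 p2 i j + oc p1 p2 k l \<le> r j + r l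
     \<and> bst a b i k - oc p1 p2 i j + max (oc p1 p2 k l - d l) (sel f1 f2 k) \<le> r j
     \<and> bst a b i k - min (d j + oc p1 p2 i j) (sel g1 g2 i) + oc p1 p2 k l \<le> r l" for j l i k
  define Lf where "Lf k l = max (max ((h l - t) / w l + oc p1 p2 k l) (- d l + oc p1 p2 k l)) (sel f1 f2 k)" for k l
  define Ug where "Ug k = (\<lambda>(i,j). min (min ((t - h j) / w j + oc p1 p2 i j) (d j + oc p1 p2 i j)) (sel g1 g2 i) - bst a b i k)" for k
  have C: "bst a b i k + max (oc p1 p2 k l - d l) (sel f1 f2 k) \<le> min (oc p1 p2 i j + d j) (sel g1 g2 i)"
    if "i \<in> {1,2}" "k \<in> {1,2}" "l \<in> ?M" "j \<in> ?M" for i k l j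
  proof -
    have "bst a b i k + Max ((\<lambda>l. max (oc p1 p2 k l - d l) (sel f1 f2 k)) ` {1..m})
         \<le> Min ((\<lambda>j. min (oc p1 p2 i j + d j) (sel g1 g2 i)) ` {1..m})" using cond that by blast
    then have "\<forall>l\<in>?M. \<forall>j\<in>?M. bst a b i k + max (oc p1 p2 k l - d l) (sel f1 f2 k) \<le> min (oc p1 p2 i j + d j) (sel g1 g2 i)"
      using ne by (subst (asm) cMax_le_Min) auto
    then show ?thesis using that by blast
  qed
  have LU: "lowb m p1 p2 w d h f1 f2 t k \<le> uppb m p1 p2 w d h g1 g2 a b t k \<longleftrightarrow>
      (\<forall>l\<in>?M. \<forall>y\<in>{1,2}\<times>?M. Lf k l \<le> Ug k y)" for k
    unfolding lowb_def uppb_def Lf_def Ug_def using ne by (subst Max_le_Min) auto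
  have pw: "Lf k l \<le> Ug k (i, j) \<longleftrightarrow> R j l i k"
    if "i \<in> {1,2}" "k \<in> {1,2}" "l \<in> ?M" "j \<in> ?M" for i k l j
  proof -
    have e: "(h l - t) / w l = - ((t - h l) / w l)" by (simp add: minus_divide_left)
    have C': "bst a b i k + max (oc p1 p2 k l - d l) (sel f1 f2 k) \<le> min (oc p1 p2 i j + d j) (sel g1 g2 i)"
      by (rule C[OF that])
    show ?thesis unfolding Lf_def Ug_def R_def r_def e prod.case by (rule pw_abs[OF C'])
  qed
  have Tc: "?T (j, l) \<le> t \<longleftrightarrow> (\<forall>i\<in>{1,2}. \<forall>k\<in>{1,2}. R j l i k)"
    if "l \<in> ?M" "j \<in> ?M" for l j
  proof -
    have wj: "w j > 0" and wl: "w l > 0" using w that by auto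
    show ?thesis
      unfolding prod.case max.bounded_iff T1[OF wj wl] T2[OF wj] T2[OF wl]
      unfolding Max4 R_def r_def by (simp only: ball_conj_distrib conj_assoc)
  qed
  have "\<theta> \<le> t \<longleftrightarrow> (\<forall>x\<in>?M \<times> ?M. ?T x \<le> t)" unfolding th by (rule Max_img_le) (use ne in auto)
  also have "\<dots> \<longleftrightarrow> (\<forall>j\<in>?M. \<forall>l\<in>?M. ?T (j, l) \<le> t)" by (rule split_paired_Ball_Sigma)
  also have "\<dots> \<longleftrightarrow> (\<forall>j\<in>?M. \<forall>l\<in>?M. \<forall>i\<in>{1,2}. \<forall>k\<in>{1,2}. R j l i k)"
  proof (intro ball_cong refl)
    fix j l assume "j \<in> ?M" "l \<in> ?M" then show "?T (j, l) \<le> t \<longleftrightarrow> (\<forall>i\<in>{1,2}. \<forall>k\<in>{1,2}. R j l i k)"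
      by (rule Tc[rotated])
  qed
  also have "\<dots> \<longleftrightarrow> (\<forall>k\<in>{1,2}. \<forall>l\<in>?M. \<forall>y\<in>{1,2}\<times>?M. Lf k l \<le> Ug k y)"
    unfolding split_paired_Ball_Sigma using pw by blast
  finally show ?thesis using LU by simp
qed


theorem corollary3:
  fixes m :: nat and p1 p2 w d h :: "nat \<Rightarrow> real"
    and f1 g1 f2 g2 a b :: real
  assumes m: "m \<ge> 1"
    and w: "\<forall>j\<in>{1..m}. w j > 0"
    and d: "\<forall>j\<in>{1..m}. d j > 0"
    and fg1: "f1 \<le> g1" and fg2: "f2 \<le> g2" and ab: "a \<le> b"
    and cond: "\<forall>i\<in>{1,2}. \<forall>k\<in>{1,2}.
       bst a b i k + Max ((\<lambda>l. max (oc p1 p2 k l - d l) (sel f1 f2 k)) ` {1..m})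
         \<le> Min ((\<lambda>j. min (oc p1 p2 i j + d j) (sel g1 g2 i)) ` {1..m})"
  defines "\<theta> \<equiv> Max ((\<lambda>(j,l).
      max (max
        (w l * h j / (w j + w l) + w j * h l / (w j + w l)
          + w j * w l / (w j + w l) *
            Max ((\<lambda>(i,k). bst a b i k - oc p1 p2 i j + oc p1 p2 k l) ` ({1,2} \<times> {1,2})))
        (h j + w j *
            Max ((\<lambda>(i,k). bst a b i k - oc p1 p2 i j
                   + max (oc p1 p2 k l - d l) (sel f1 f2 k)) ` ({1,2} \<times> {1,2}))))
        (h l + w l *
            Max ((\<lambda>(i,k). bst a b i k - min (d j + oc p1 p2 i j) (sel g1 g2 i)
                   + oc p1 p2 k l) ` ({1,2} \<times> {1,2}))))
      ` ({1..m} \<times> {1..m}))"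
  shows "(\<exists>x1 x2. feasible m p1 p2 d f1 g1 f2 g2 a b x1 x2 \<and> objf m p1 p2 w h x1 x2 = \<theta>)
       \<and> (\<forall>x1 x2. feasible m p1 p2 d f1 g1 f2 g2 a b x1 x2 \<longrightarrow> \<theta> \<le> objf m p1 p2 w h x1 x2)
       \<and> (\<forall>x1 x2. (feasible m p1 p2 d f1 g1 f2 g2 a b x1 x2 \<and> objf m p1 p2 w h x1 x2 = \<theta>)
            \<longleftrightarrow> (\<exists>u1 u2.
                  (\<forall>k\<in>{1,2}.
                     Max ((\<lambda>j. max (max ((h j - \<theta>) / w j + oc p1 p2 k j) (- d j + oc p1 p2 k j))
                                  (sel f1 f2 k)) ` {1..m})
                       \<le> sel u1 u2 k
                   \<and> sel u1 u2 k \<le>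
                     Min ((\<lambda>(i,j). min (min ((\<theta> - h j) / w j + oc p1 p2 i j) (d j + oc p1 p2 i j))
                                     (sel g1 g2 i) - bst a b i k) ` ({1,2} \<times> {1..m})))
                \<and> (let y1 = max (bst a b 1 1 + u1) (bst a b 1 2 + u2);
                       y2 = max (bst a b 2 1 + u1) (bst a b 2 2 + u2)
                   in x1 = (y1 - y2) / 2 \<and> x2 = (y1 + y2) / 2)))"
proof -
  have thq: "\<theta> = Max ((\<lambda>(j,l).
      max (max
        (w l * h j / (w j + w l) + w j * h l / (w j + w l)
          + w j * w l / (w j + w l) *
            Max ((\<lambda>(i,k). bst a b i k - oc p1 p2 i j + oc p1 p2 k l) ` ({1,2} \<times> {1,2})))
        (h j + w j *
            Max ((\<lambda>(i,k). bst a b i k - oc p1 p2 i j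
                   + max (oc p1 p2 k l - d l) (sel f1 f2 k)) ` ({1,2} \<times> {1,2}))))
        (h l + w l *
            Max ((\<lambda>(i,k). bst a b i k - min (d j + oc p1 p2 i j) (sel g1 g2 i)
                   + oc p1 p2 k l) ` ({1,2} \<times> {1,2}))))
      ` ({1..m} \<times> {1..m}))" by (simp only: \<theta>_def)
  note TC = theta_char[OF m w cond thq]
  have from_u: "\<theta> \<le> t" if "\<forall>k\<in>{1,2}. lowb m p1 p2 w d h f1 f2 t k \<le> sel u1 u2 k
                \<and> sel u1 u2 k \<le> uppb m p1 p2 w d h g1 g2 a b t k" for t u1 u2
    using that TC[of t] by force
  have P2: "\<theta> \<le> objf m p1 p2 w h x1 x2" if F: "feasible m p1 p2 d f1 g1 f2 g2 a b x1 x2" for x1 x2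
  proof -
    have "Gy m p1 p2 w d h f1 g1 f2 g2 a b (objf m p1 p2 w h x1 x2) (x1 + x2) (x2 - x1)"
      using feas_obj[OF m w] F by blast
    then obtain u1 u2 where "\<forall>k\<in>{1,2}. lowb m p1 p2 w d h f1 f2 (objf m p1 p2 w h x1 x2) k \<le> sel u1 u2 k
                \<and> sel u1 u2 k \<le> uppb m p1 p2 w d h g1 g2 a b (objf m p1 p2 w h x1 x2) k"
      unfolding Gu[OF m ab] by blast
    then show ?thesis by (rule from_u)
  qed
  have G3: "(feasible m p1 p2 d f1 g1 f2 g2 a b x1 x2 \<and> objf m p1 p2 w h x1 x2 = \<theta>)
     \<longleftrightarrow> Gy m p1 p2 w d h f1 g1 f2 g2 a b \<theta> (x1 + x2) (x2 - x1)" for x1 x2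
  proof -
    have FO: "(feasible m p1 p2 d f1 g1 f2 g2 a b x1 x2 \<and> objf m p1 p2 w h x1 x2 \<le> \<theta>)
       \<longleftrightarrow> Gy m p1 p2 w d h f1 g1 f2 g2 a b \<theta> (x1 + x2) (x2 - x1)" by (rule feas_obj[OF m w])
    show ?thesis using FO P2[of x1 x2] by (metis order.antisym order.refl)
  qed
  have P3: "(feasible m p1 p2 d f1 g1 f2 g2 a b x1 x2 \<and> objf m p1 p2 w h x1 x2 = \<theta>)
     \<longleftrightarrow> (\<exists>u1 u2. (\<forall>k\<in>{1,2}. lowb m p1 p2 w d h f1 f2 \<theta> k \<le> sel u1 u2 k
                \<and> sel u1 u2 k \<le> uppb m p1 p2 w d h g1 g2 a b \<theta> k)
                \<and> (let y1 = max (bst a b 1 1 + u1) (bst a b 1 2 + u2);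
                       y2 = max (bst a b 2 1 + u1) (bst a b 2 2 + u2)
                   in x1 = (y1 - y2) / 2 \<and> x2 = (y1 + y2) / 2))" for x1 x2
  proof -
    have e: "(x1 = (y1 - y2) / 2 \<and> x2 = (y1 + y2) / 2) \<longleftrightarrow> (x1 + x2 = y1 \<and> x2 - x1 = y2)" for y1 y2 :: real
      by auto
    show ?thesis unfolding G3 Gu[OF m ab] Let_def e ..
  qed
  have P1: "\<exists>x1 x2. feasible m p1 p2 d f1 g1 f2 g2 a b x1 x2 \<and> objf m p1 p2 w h x1 x2 = \<theta>"
  proof -
    let ?u1 = "lowb m p1 p2 w d h f1 f2 \<theta> 1" and ?u2 = "lowb m p1 p2 w d h f1 f2 \<theta> 2"
    have "\<forall>k\<in>{1,2}. lowb m p1 p2 w d h f1 f2 \<theta> k \<le> uppb m p1 p2 w d h g1 g2 a b \<theta> k"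
      using TC by simp
    then have U: "\<forall>k\<in>{1,2}. lowb m p1 p2 w d h f1 f2 \<theta> k \<le> sel ?u1 ?u2 k
                \<and> sel ?u1 ?u2 k \<le> uppb m p1 p2 w d h g1 g2 a b \<theta> k" by auto
    define y1 where "y1 = max (bst a b 1 1 + ?u1) (bst a b 1 2 + ?u2)"
    define y2 where "y2 = max (bst a b 2 1 + ?u1) (bst a b 2 2 + ?u2)"
    have "(y1 - y2) / 2 + (y1 + y2) / 2 = y1" "(y1 + y2) / 2 - (y1 - y2) / 2 = y2" by (simp_all add: field_simps)
    then show ?thesis using P3[of "(y1 - y2) / 2" "(y1 + y2) / 2"] U unfolding y1_def y2_def Let_def
      by blast
  qed
  show ?thesis using P1 P2 P3 unfolding lowb_def uppb_def by blast
qed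

end
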